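(* There exist a convex semialgebraic function $h:\mathbb{R}^2\to\mathbb{R}$ of class $C^1$ with $1$-Lipschitz gradient and a constant $\rho\in(0,1)$ such that $\|x-\nabla h(x)\|\le\rho\|x\|$ for all $x\in\mathbb{R}^2$, while $h$ is not strongly convex on any neighborhood of $0$ and the Clarke Jacobian $\mathrm{Jac}^c_{\nabla h}(0)$ contains a singular matrix.
   Context: Clarke Jacobian: for a locally Lipschitz $F:\mathbb{R}^N\to\mathbb{R}^m$, $\mathrm{Jac}^c_F(z)=\mathrm{conv}\{\lim_k \mathrm{Jac}_F(z_k): z_k\to z,\ F \text{ differentiable at } z_k\}$. A function is semialgebraic if its graph is a finite union of sets defined by finitely many polynomial equalities and inequalities. *)

theory Defs
  imports "HOL-Analysis.Analysis"
begin

definition poly_fun :: "('a::euclidean_space \<Rightarrow> real) \<Rightarrow> bool" where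
  "poly_fun p \<longleftrightarrow> (\<exists>(A :: ('a \<Rightarrow> nat) set) (c :: ('a \<Rightarrow> nat) \<Rightarrow> real).
      finite A \<and> p = (\<lambda>x. \<Sum>\<alpha>\<in>A. c \<alpha> * (\<Prod>b\<in>Basis. (x \<bullet> b) ^ \<alpha> b)))"

definition basic_semialgebraic :: "'a::euclidean_space set \<Rightarrow> bool" where
  "basic_semialgebraic S \<longleftrightarrow> (\<exists>P Q :: ('a \<Rightarrow> real) list.
      (\<forall>p\<in>set P. poly_fun p) \<and> (\<forall>q\<in>set Q. poly_fun q) \<and>
      S = {x. (\<forall>p\<in>set P. p x = 0) \<and> (\<forall>q\<in>set Q. q x > 0)})"

definition semialgebraic :: "'a::euclidean_space set \<Rightarrow> bool" where
  "semialgebraic S \<longleftrightarrow> (\<exists>F. finite F \<and> (\<forall>T\<in>F. basic_semialgebraic T) \<and> S = \<Union>F)"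

definition semialgebraic_fun :: "('a::euclidean_space \<Rightarrow> 'b::euclidean_space) \<Rightarrow> bool" where
  "semialgebraic_fun f \<longleftrightarrow> semialgebraic {(x, f x) | x. True}"

definition strongly_convex_on :: "'a::real_normed_vector set \<Rightarrow> ('a \<Rightarrow> real) \<Rightarrow> bool" where
  "strongly_convex_on S f \<longleftrightarrow> (\<exists>\<mu>>0. convex_on S (\<lambda>x. f x - \<mu> / 2 * (norm x)\<^sup>2))"

definition clarke_jacobian :: "(real^'n \<Rightarrow> real^'m) \<Rightarrow> real^'n \<Rightarrow> (real^'n^'m) set" where
  "clarke_jacobian F z = convex hull {M. \<exists>zs :: nat \<Rightarrow> real^'n.
      zs \<longlonglongrightarrow> z \<and> (\<forall>k. F differentiable (at (zs k))) \<and>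
      (\<lambda>k. matrix (frechet_derivative F (at (zs k)))) \<longlonglongrightarrow> M}"

end

theory Submission
  imports Defs
begin


definition mono_fun :: "('a::euclidean_space \<Rightarrow> nat) \<Rightarrow> 'a \<Rightarrow> real" where
  "mono_fun \<alpha> x = (\<Prod>b\<in>Basis. (x \<bullet> b) ^ \<alpha> b)"

lemma poly_fun_alt: "poly_fun p \<longleftrightarrow> (\<exists>A c. finite A \<and> p = (\<lambda>x. \<Sum>\<alpha>\<in>A. c \<alpha> * mono_fun \<alpha> x))"
  unfolding poly_fun_def mono_fun_def by simp

lemma mono_fun_add: "mono_fun (\<lambda>b. \<alpha> b + \<beta> b) x = mono_fun \<alpha> x * mono_fun \<beta> x"
  unfolding mono_fun_def by (simp add: power_add prod.distrib)

lemma poly_fun_const: "poly_fun (\<lambda>x. c)"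
  unfolding poly_fun_alt
  by (rule exI[of _ "{\<lambda>_. 0}"], rule exI[of _ "\<lambda>_. c"]) (simp add: mono_fun_def)

lemma poly_fun_coord: assumes "b \<in> Basis" shows "poly_fun (\<lambda>x. x \<bullet> b)"
proof -
  have "\<And>x. mono_fun (\<lambda>c. if c = b then 1 else 0) x = x \<bullet> b"
    unfolding mono_fun_def using assms
    by (simp add: if_distrib[of "\<lambda>n. _ ^ n"] prod.delta cong: if_cong)
  then show ?thesis unfolding poly_fun_alt
    by (intro exI[of _ "{\<lambda>c. if c = b then 1 else 0}"] exI[of _ "\<lambda>_. 1"]) auto
qed

lemma poly_fun_add: assumes "poly_fun p" "poly_fun q" shows "poly_fun (\<lambda>x. p x + q x)"
proof -
  obtain A c where A: "finite A" "p = (\<lambda>x. \<Sum>\<alpha>\<in>A. c \<alpha> * mono_fun \<alpha> x)"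
    using assms(1) unfolding poly_fun_alt by blast
  obtain B d where B: "finite B" "q = (\<lambda>x. \<Sum>\<alpha>\<in>B. d \<alpha> * mono_fun \<alpha> x)"
    using assms(2) unfolding poly_fun_alt by blast
  define e where "e \<alpha> = (if \<alpha> \<in> A then c \<alpha> else 0) + (if \<alpha> \<in> B then d \<alpha> else 0)" for \<alpha>
  have "\<And>x. p x + q x = (\<Sum>\<alpha>\<in>A \<union> B. e \<alpha> * mono_fun \<alpha> x)"
  proof -
    fix x
    have 1: "(\<Sum>\<alpha>\<in>A. c \<alpha> * mono_fun \<alpha> x) = (\<Sum>\<alpha>\<in>A \<union> B. (if \<alpha> \<in> A then c \<alpha> else 0) * mono_fun \<alpha> x)"
      using A(1) B(1) by (intro sum.mono_neutral_cong_left) auto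
    have 2: "(\<Sum>\<alpha>\<in>B. d \<alpha> * mono_fun \<alpha> x) = (\<Sum>\<alpha>\<in>A \<union> B. (if \<alpha> \<in> B then d \<alpha> else 0) * mono_fun \<alpha> x)"
      using A(1) B(1) by (intro sum.mono_neutral_cong_left) auto
    show "p x + q x = (\<Sum>\<alpha>\<in>A \<union> B. e \<alpha> * mono_fun \<alpha> x)"
      unfolding A(2) B(2) 1 2 e_def by (simp add: sum.distrib distrib_right)
  qed
  then show ?thesis unfolding poly_fun_alt using A(1) B(1) by blast
qed

lemma poly_fun_mult: assumes "poly_fun p" "poly_fun q" shows "poly_fun (\<lambda>x. p x * q x)"
proof -
  obtain A c where A: "finite A" "p = (\<lambda>x. \<Sum>\<alpha>\<in>A. c \<alpha> * mono_fun \<alpha> x)"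
    using assms(1) unfolding poly_fun_alt by blast
  obtain B d where B: "finite B" "q = (\<lambda>x. \<Sum>\<alpha>\<in>B. d \<alpha> * mono_fun \<alpha> x)"
    using assms(2) unfolding poly_fun_alt by blast
  define g where "g pr = (\<lambda>b. fst pr b + snd pr b)" for pr :: "('a \<Rightarrow> nat) \<times> ('a \<Rightarrow> nat)"
  define e where "e \<gamma> = (\<Sum>pr\<in>{pr \<in> A \<times> B. g pr = \<gamma>}. c (fst pr) * d (snd pr))" for \<gamma>
  have fin: "finite (A \<times> B)" using A(1) B(1) by simp
  have "\<And>x. p x * q x = (\<Sum>\<gamma>\<in>g ` (A \<times> B). e \<gamma> * mono_fun \<gamma> x)"
  proof -
    fix x
    have "p x * q x = (\<Sum>\<alpha>\<in>A. \<Sum>\<beta>\<in>B. (c \<alpha> * mono_fun \<alpha> x) * (d \<beta> * mono_fun \<beta> x))"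
      unfolding A(2) B(2) by (simp add: sum_product)
    also have "\<dots> = (\<Sum>pr\<in>A \<times> B. c (fst pr) * d (snd pr) * mono_fun (g pr) x)"
      unfolding sum.cartesian_product g_def by (simp add: mono_fun_add split_def mult_ac)
    also have "\<dots> = (\<Sum>\<gamma>\<in>g ` (A \<times> B). \<Sum>pr\<in>{pr \<in> A \<times> B. g pr = \<gamma>}. c (fst pr) * d (snd pr) * mono_fun (g pr) x)"
      by (rule sum.image_gen[OF fin])
    also have "\<dots> = (\<Sum>\<gamma>\<in>g ` (A \<times> B). e \<gamma> * mono_fun \<gamma> x)"
      unfolding e_def sum_distrib_right by (intro sum.cong refl) auto
    finally show "p x * q x = (\<Sum>\<gamma>\<in>g ` (A \<times> B). e \<gamma> * mono_fun \<gamma> x)" .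
  qed
  then show ?thesis unfolding poly_fun_alt using fin by blast
qed

lemma poly_fun_power: assumes "poly_fun p" shows "poly_fun (\<lambda>x. p x ^ n)"
  by (induction n) (simp_all add: poly_fun_const poly_fun_mult assms)

lemma poly_fun_diff: assumes "poly_fun p" "poly_fun q" shows "poly_fun (\<lambda>x. p x - q x)"
proof -
  have "poly_fun (\<lambda>x. p x + (-1) * q x)"
    by (intro poly_fun_add poly_fun_mult poly_fun_const assms)
  then show ?thesis by simp
qed



lemma psd2:
  fixes p q t u w :: real
  assumes "p \<ge> 0" "t \<ge> 0" "p * t \<ge> q^2"
  shows "0 \<le> p*u^2 + 2*q*u* w + t* w^2"
proof (cases "p = 0")
  case True
  then have "q^2 \<le> 0" using assms by simp
  then have "q = 0" by simp
  then show ?thesis using True assms by simp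
next
  case False
  then have pp: "p > 0" using assms by simp
  have "p * (p*u^2 + 2*q*u* w + t* w^2) = (p*u+q* w)^2 + (p*t - q^2)* w^2"
    by (simp add: power2_eq_square algebra_simps)
  also have "\<dots> \<ge> 0" using assms by (intro add_nonneg_nonneg mult_nonneg_nonneg) auto
  finally show ?thesis using pp by (simp add: zero_le_mult_iff)
qed

lemma nrm2:
  fixes p q t u w :: real
  assumes "p \<ge> 0" "t \<ge> 0" "p * t \<ge> q^2" "1 - p \<ge> 0" "1 - t \<ge> 0" "(1-p)*(1-t) \<ge> q^2"
  shows "(p*u+q* w)^2 + (q*u+t* w)^2 \<le> u^2 + w^2"
proof -
  define N where "N = u^2 + w^2"
  define Qf where "Qf = p*u^2 + 2*q*u* w + t* w^2"
  define dt where "dt = p*t - q^2"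
  have id: "(p*u+q* w)^2 + (q*u+t* w)^2 = (p+t)*Qf - dt*N"
    unfolding Qf_def dt_def N_def by (simp add: power2_eq_square algebra_simps)
  have Q0: "Qf \<ge> 0" unfolding Qf_def by (rule psd2) (use assms in auto)
  have "0 \<le> (1-p)*u^2 + 2*(-q)*u* w + (1-t)* w^2" by (rule psd2) (use assms in auto)
  then have QN: "Qf \<le> N" unfolding Qf_def N_def by (simp add: algebra_simps)
  have d0: "dt \<ge> 0" unfolding dt_def using assms by simp
  have pt: "p + t \<le> 1 + dt" unfolding dt_def using assms(6) by (simp add: algebra_simps)
  have "(p+t)*Qf \<le> (1+dt)*Qf" using pt Q0 by (rule mult_right_mono)
  also have "\<dots> \<le> (1+dt)*N" using QN d0 by (intro mult_left_mono) auto
  finally show ?thesis unfolding id N_def by (simp add: algebra_simps)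
qed

lemma ineqs:
  fixes a b :: real
  assumes a: "a \<ge> 0" and b: "b \<ge> 0" and ab: "a + b > 0"
  defines "P \<equiv> (a^3+3*a^2*b+6*a*b^2)/(2*(a+b)^3)"
    and "T \<equiv> (b^3+3*b^2*a+6*b*a^2)/(2*(a+b)^3)"
    and "Q2 \<equiv> 4*a^3*b^3/(a+b)^6"
  shows "P \<ge> 0" "T \<ge> 0" "1 - P \<ge> 0" "1 - T \<ge> 0" "P*T \<ge> Q2" "(1-P)*(1-T) \<ge> Q2"
proof -
  have D: "(a+b)^3 > 0" using ab by simp
  have m: "a^3 \<ge> 0" "b^3 \<ge> 0" "a^2*b \<ge> 0" "a*b^2 \<ge> 0" "b^2*a \<ge> 0" "b*a^2 \<ge> 0"
    using a b by auto
  show "P \<ge> 0" unfolding P_def using D m by (intro divide_nonneg_pos) auto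
  show "T \<ge> 0" unfolding T_def using D m by (intro divide_nonneg_pos) auto
  have P1: "1 - P = (a^3+3*a^2*b+2*b^3)/(2*(a+b)^3)" unfolding P_def using D
    by (simp add: field_simps power3_eq_cube power2_eq_square)
  then show "1 - P \<ge> 0" using D m by (simp add: divide_nonneg_pos)
  have T1: "1 - T = (b^3+3*b^2*a+2*a^3)/(2*(a+b)^3)" unfolding T_def using D
    by (simp add: field_simps power3_eq_cube power2_eq_square)
  then show "1 - T \<ge> 0" using D m by (simp add: divide_nonneg_pos)
  have D6: "(a+b)^6 = (a+b)^3 * (a+b)^3" by (simp flip: power_add)
  have Q2': "Q2 = (16*a^3*b^3) / (4*(a+b)^6)" unfolding Q2_def by simp
  have "P*T = ((a^3+3*a^2*b+6*a*b^2)*(b^3+3*b^2*a+6*b*a^2)) / (4*(a+b)^6)"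
    unfolding P_def T_def D6 by simp
  moreover have "(a^3+3*a^2*b+6*a*b^2)*(b^3+3*b^2*a+6*b*a^2)
     = 16*a^3*b^3 + (6*a^5*b + 21*a^4*b^2 + 30*a^3*b^3 + 21*a^2*b^4 + 6*a*b^5)"
    by (simp add: power2_eq_square power3_eq_cube algebra_simps numeral_eq_Suc)
  moreover have "6*a^5*b + 21*a^4*b^2 + 30*a^3*b^3 + 21*a^2*b^4 + 6*a*b^5 \<ge> 0"
    using a b by (intro add_nonneg_nonneg mult_nonneg_nonneg) auto
  ultimately show "P*T \<ge> Q2" unfolding Q2' by (metis divide_right_mono le_add_same_cancel1 zero_le_numeral mult_nonneg_nonneg zero_le_power ab less_imp_le)
  have "(1-P)*(1-T) = ((a^3+3*a^2*b+2*b^3)*(b^3+3*b^2*a+2*a^3)) / (4*(a+b)^6)"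
    unfolding D6 P1 T1 by simp
  moreover have "(a^3+3*a^2*b+2*b^3)*(b^3+3*b^2*a+2*a^3)
     = 16*a^3*b^3 + ((a^3-b^3)^2 + a^6 + b^6 + 6*a^5*b + 3*a^4*b^2 + 3*a^2*b^4 + 6*a*b^5)"
    by (simp add: power2_eq_square power3_eq_cube algebra_simps numeral_eq_Suc)
  moreover have "(a^3-b^3)^2 + a^6 + b^6 + 6*a^5*b + 3*a^4*b^2 + 3*a^2*b^4 + 6*a*b^5 \<ge> 0"
    using a b by (intro add_nonneg_nonneg mult_nonneg_nonneg) auto
  ultimately show "(1-P)*(1-T) \<ge> Q2" unfolding Q2' by (metis divide_right_mono le_add_same_cancel1 zero_le_numeral mult_nonneg_nonneg zero_le_power ab less_imp_le)
qed



lemma has_derivative_nth[derivative_intros]: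
  "((\<lambda>x. x $ i) has_derivative (\<lambda>x. x $ i)) F"
  by (rule bounded_linear_imp_has_derivative[OF bounded_linear_vec_nth])

definition G1 :: "real^2 \<Rightarrow> real" where
  "G1 x = (x$1^5 + 2*x$1^3*x$2^2)/(2*(x$1^2+x$2^2)^2)"
definition G2 :: "real^2 \<Rightarrow> real" where
  "G2 x = (x$2^5 + 2*x$2^3*x$1^2)/(2*(x$1^2+x$2^2)^2)"
definition Pp :: "real^2 \<Rightarrow> real" where
  "Pp x = (x$1^6 + 3*x$1^4*x$2^2 + 6*x$1^2*x$2^4)/(2*(x$1^2+x$2^2)^3)"
definition Tt :: "real^2 \<Rightarrow> real" where
  "Tt x = (x$2^6 + 3*x$2^4*x$1^2 + 6*x$2^2*x$1^4)/(2*(x$1^2+x$2^2)^3)"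
definition Qq :: "real^2 \<Rightarrow> real" where
  "Qq x = -2*x$1^3*x$2^3/(x$1^2+x$2^2)^3"

lemma nz2: "(x::real^2) \<noteq> 0 \<Longrightarrow> x$1^2 + x$2^2 \<noteq> 0"
  by (metis (mono_tags, lifting) add_nonneg_eq_0_iff exhaust_2 vec_eq_iff zero_index zero_le_power2 zero_eq_power2)

definition hh :: "real^2 \<Rightarrow> real" where
  "hh x = (x$1^4 + x$1^2*x$2^2 + x$2^4) / (4*(x$1^2+x$2^2))"

schematic_goal dG1: assumes s: "x$1^2 + x$2^2 \<noteq> 0" shows "(G1 has_derivative ?f) (at x)"
  unfolding G1_def by (rule derivative_eq_intros refl | use s in simp)+
schematic_goal dG2: assumes s: "x$1^2 + x$2^2 \<noteq> 0" shows "(G2 has_derivative ?f) (at x)"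
  unfolding G2_def by (rule derivative_eq_intros refl | use s in simp)+
schematic_goal dh: assumes s: "x$1^2 + x$2^2 \<noteq> 0" shows "(hh has_derivative ?f) (at x)"
  unfolding hh_def apply (rule derivative_eq_intros refl)+ apply (use s in \<open>metis mult_eq_0_iff zero_neq_numeral\<close>) by (rule refl)


lemma alg_G1:
  fixes u w h1 h2 :: real assumes s: "u^2+w^2 \<noteq> 0"
  shows "- (u ^ 5 + 2 * u ^ 3 * w\<^sup>2) *
        (inverse (2 * (u\<^sup>2 + w\<^sup>2)\<^sup>2) *
         (2 * (real 2 * (real 2 * h1 * u ^ (2 - 1) + real 2 * h2 * w ^ (2 - 1)) *
           (u\<^sup>2 + w\<^sup>2) ^ (2 - 1))) *
         inverse (2 * (u\<^sup>2 + w\<^sup>2)\<^sup>2)) +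
        (real 5 * h1 * u ^ (5 - 1) + (2 * u ^ 3 * (real 2 * h2 * w ^ (2 - 1)) +
          2 * (real 3 * h1 * u ^ (3 - 1)) * w\<^sup>2)) / (2 * (u\<^sup>2 + w\<^sup>2)\<^sup>2)
   = (u^6 + 3*u^4*w^2 + 6*u^2*w^4)/(2*(u^2+w^2)^3) * h1 + (-2*u^3*w^3/(u^2+w^2)^3) * h2"
proof -
  define S where "S = u^2+w^2"
  have S: "S \<noteq> 0" using s S_def by simp
  show ?thesis unfolding S_def[symmetric] using S
    apply (simp add: field_simps)
    apply (simp add: S_def power2_eq_square power3_eq_cube numeral_eq_Suc algebra_simps)
    done
qed

lemma alg_G2:
  fixes u w h1 h2 :: real assumes s: "u^2+w^2 \<noteq> 0"
  shows "- (w ^ 5 + 2 * w ^ 3 * u\<^sup>2) *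
        (inverse (2 * (u\<^sup>2 + w\<^sup>2)\<^sup>2) *
         (2 * (real 2 * (real 2 * h1 * u ^ (2 - 1) + real 2 * h2 * w ^ (2 - 1)) *
           (u\<^sup>2 + w\<^sup>2) ^ (2 - 1))) *
         inverse (2 * (u\<^sup>2 + w\<^sup>2)\<^sup>2)) +
        (real 5 * h2 * w ^ (5 - 1) + (2 * w ^ 3 * (real 2 * h1 * u ^ (2 - 1)) +
          2 * (real 3 * h2 * w ^ (3 - 1)) * u\<^sup>2)) / (2 * (u\<^sup>2 + w\<^sup>2)\<^sup>2)
   = (-2*u^3*w^3/(u^2+w^2)^3) * h1 + (w^6 + 3*w^4*u^2 + 6*w^2*u^4)/(2*(u^2+w^2)^3) * h2"
proof -
  define S where "S = u^2+w^2"
  have S: "S \<noteq> 0" using s S_def by simp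
  show ?thesis unfolding S_def[symmetric] using S
    apply (simp add: field_simps)
    apply (simp add: S_def power2_eq_square power3_eq_cube numeral_eq_Suc algebra_simps)
    done
qed

lemma alg_h:
  fixes u w h1 h2 :: real assumes s: "u^2+w^2 \<noteq> 0"
  shows "- (u ^ 4 + u\<^sup>2 * w\<^sup>2 + w ^ 4) *
          (inverse (4 * (u\<^sup>2 + w\<^sup>2)) *
           (4 * (real 2 * h1 * u ^ (2 - 1) + real 2 * h2 * w ^ (2 - 1))) *
           inverse (4 * (u\<^sup>2 + w\<^sup>2))) +
          (real 4 * h1 * u ^ (4 - 1) +
           (u\<^sup>2 * (real 2 * h2 * w ^ (2 - 1)) + real 2 * h1 * u ^ (2 - 1) * w\<^sup>2) +
           real 4 * h2 * w ^ (4 - 1)) / (4 * (u\<^sup>2 + w\<^sup>2))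
   = (u^5 + 2*u^3*w^2)/(2*(u^2+w^2)^2) * h1 + (w^5 + 2*w^3*u^2)/(2*(u^2+w^2)^2) * h2"
proof -
  define S where "S = u^2+w^2"
  have S: "S \<noteq> 0" using s S_def by simp
  show ?thesis unfolding S_def[symmetric] using S
    apply (simp add: field_simps)
    apply (simp add: S_def power2_eq_square power3_eq_cube numeral_eq_Suc algebra_simps)
    done
qed

lemma G1_deriv: assumes "x \<noteq> 0"
  shows "(G1 has_derivative (\<lambda>h. Pp x * h$1 + Qq x * h$2)) (at x)"
proof -
  have s: "x$1^2 + x$2^2 \<noteq> 0" using nz2[OF assms] .
  show ?thesis
    apply (rule has_derivative_eq_rhs[OF dG1[OF s]])
    apply (rule ext)
    unfolding Pp_def Qq_def by (rule alg_G1[OF s])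
qed

lemma G2_deriv: assumes "x \<noteq> 0"
  shows "(G2 has_derivative (\<lambda>h. Qq x * h$1 + Tt x * h$2)) (at x)"
proof -
  have s: "x$1^2 + x$2^2 \<noteq> 0" using nz2[OF assms] .
  show ?thesis
    apply (rule has_derivative_eq_rhs[OF dG2[OF s]])
    apply (rule ext)
    unfolding Tt_def Qq_def by (rule alg_G2[OF s])
qed

lemma hh_deriv: assumes "x \<noteq> 0"
  shows "(hh has_derivative (\<lambda>h. G1 x * h$1 + G2 x * h$2)) (at x)"
proof -
  have s: "x$1^2 + x$2^2 \<noteq> 0" using nz2[OF assms] .
  show ?thesis
    apply (rule has_derivative_eq_rhs[OF dh[OF s]])
    apply (rule ext)
    unfolding G1_def G2_def by (rule alg_h[OF s])
qed


lemma coord1: "poly_fun (\<lambda>z::(real^2)\<times>real. fst z $ 1)"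
proof -
  have "(axis 1 1, 0) \<in> (Basis :: ((real^2)\<times>real) set)"
    by (auto simp: Basis_prod_def axis_in_Basis_iff)
  then have "poly_fun (\<lambda>z::(real^2)\<times>real. z \<bullet> (axis 1 1, 0))" by (rule poly_fun_coord)
  then show ?thesis by (simp add: inner_Pair_0 inner_axis)
qed

lemma coord2: "poly_fun (\<lambda>z::(real^2)\<times>real. fst z $ 2)"
proof -
  have "(axis 2 1, 0) \<in> (Basis :: ((real^2)\<times>real) set)"
    by (auto simp: Basis_prod_def axis_in_Basis_iff)
  then have "poly_fun (\<lambda>z::(real^2)\<times>real. z \<bullet> (axis 2 1, 0))" by (rule poly_fun_coord)
  then show ?thesis by (simp add: inner_Pair_0 inner_axis)
qed

lemma coord3: "poly_fun (\<lambda>z::(real^2)\<times>real. snd z)"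
proof -
  have "(0, 1) \<in> (Basis :: ((real^2)\<times>real) set)"
    by (auto simp: Basis_prod_def)
  then have "poly_fun (\<lambda>z::(real^2)\<times>real. z \<bullet> (0, 1))" by (rule poly_fun_coord)
  then show ?thesis by (simp add: inner_Pair_0)
qed

lemma semialg_hh: "semialgebraic_fun hh"
proof -
  define p1 where "p1 = (\<lambda>z::(real^2)\<times>real. 4 * snd z * ((fst z $ 1)^2 + (fst z $ 2)^2)
      - ((fst z $ 1)^4 + (fst z $ 1)^2 * (fst z $ 2)^2 + (fst z $ 2)^4))"
  define q1 where "q1 = (\<lambda>z::(real^2)\<times>real. (fst z $ 1)^2 + (fst z $ 2)^2)"
  have pp1: "poly_fun p1" unfolding p1_def
    by (intro poly_fun_diff poly_fun_add poly_fun_mult poly_fun_power poly_fun_const coord1 coord2 coord3)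
  have pq1: "poly_fun q1" unfolding q1_def
    by (intro poly_fun_diff poly_fun_add poly_fun_mult poly_fun_power poly_fun_const coord1 coord2 coord3)
  define T1 where "T1 = {z. (\<forall>p\<in>set [p1]. p z = 0) \<and> (\<forall>q\<in>set [q1]. q z > 0)}"
  define T2 where "T2 = {z::(real^2)\<times>real. (\<forall>p\<in>set [\<lambda>z. fst z $ 1, \<lambda>z. fst z $ 2, snd]. p z = 0) \<and> (\<forall>q\<in>set []. q z > 0)}"
  have b1: "basic_semialgebraic T1" unfolding basic_semialgebraic_def T1_def
    using pp1 pq1 by (intro exI[of _ "[p1]"] exI[of _ "[q1]"]) auto
  have b2: "basic_semialgebraic T2" unfolding basic_semialgebraic_def T2_def
    using coord1 coord2 coord3 by (intro exI[of _ "[\<lambda>z. fst z $ 1, \<lambda>z. fst z $ 2, snd]"] exI[of _ "[]"]) auto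
  have eq: "{(x, hh x) | x. True} = T1 \<union> T2"
  proof (intro set_eqI iffI)
    fix z assume "z \<in> {(x, hh x) | x. True}"
    then obtain x where z: "z = (x, hh x)" by blast
    show "z \<in> T1 \<union> T2"
    proof (cases "x$1^2 + x$2^2 = 0")
      case True
      then have "x$1 = 0" "x$2 = 0" by (auto simp: add_nonneg_eq_0_iff)
      then show ?thesis by (simp add: z T2_def hh_def)
    next
      case False
      then have pos: "(x$1)^2 + (x$2)^2 > 0" by (metis add_nonneg_nonneg le_less zero_le_power2)
      have nz: "4 * ((x$1)^2 + (x$2)^2) \<noteq> 0" using False by (metis mult_eq_0_iff zero_neq_numeral)
      have "hh x * (4 * ((x$1)^2 + (x$2)^2)) = x$1^4 + x$1^2*x$2^2 + x$2^4"
        unfolding hh_def by (rule iffD1[OF nonzero_eq_divide_eq[OF nz] refl])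
      then have "4 * hh x * ((x$1)^2 + (x$2)^2) = x$1^4 + x$1^2*x$2^2 + x$2^4"
        by (simp add: mult_ac)
      then have "z \<in> T1" using pos by (simp add: z T1_def p1_def q1_def)
      then show ?thesis by blast
    qed
  next
    fix z assume "z \<in> T1 \<union> T2"
    obtain x y where z: "z = (x, y)" by fastforce
    have "y = hh x"
    proof (cases "z \<in> T1")
      case True
      then have "x$1^2 + x$2^2 > 0" "4 * y * (x$1^2 + x$2^2) = x$1^4 + x$1^2*x$2^2 + x$2^4"
        by (auto simp: T1_def p1_def q1_def z)
      then show ?thesis by (simp add: hh_def field_simps)
    next
      case False
      then have "z \<in> T2" using \<open>z \<in> T1 \<union> T2\<close> by blast
      then show ?thesis by (simp add: T2_def z hh_def)
    qed
    then show "z \<in> {(x, hh x) | x. True}" using z by blast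
  qed
  show ?thesis unfolding semialgebraic_fun_def semialgebraic_def eq
    using b1 b2 by (intro exI[of _ "{T1, T2}"]) auto
qed



definition gg :: "real^2 \<Rightarrow> real^2" where
  "gg x = G1 x *\<^sub>R axis 1 1 + G2 x *\<^sub>R axis 2 1"
definition JJ :: "real^2 \<Rightarrow> real^2 \<Rightarrow> real^2" where
  "JJ x d = (Pp x * d$1 + Qq x * d$2) *\<^sub>R axis 1 1 + (Qq x * d$1 + Tt x * d$2) *\<^sub>R axis 2 1"

lemma gg1[simp]: "gg x $ 1 = G1 x" and gg2[simp]: "gg x $ 2 = G2 x"
  by (simp_all add: gg_def axis_def)
lemma JJ1[simp]: "JJ x d $ 1 = Pp x * d$1 + Qq x * d$2" and JJ2[simp]: "JJ x d $ 2 = Qq x * d$1 + Tt x * d$2"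
  by (simp_all add: JJ_def axis_def)

lemma inner2: "(x::real^2) \<bullet> y = x$1*y$1 + x$2*y$2" by (simp add: inner_vec_def sum_2)
lemma norm2: "norm (x::real^2) = sqrt((x$1)^2 + (x$2)^2)"
  by (simp add: norm_eq_sqrt_inner inner_vec_def sum_2 power2_eq_square)
lemma vec2_eq: "(x::real^2) = y \<longleftrightarrow> x$1 = y$1 \<and> x$2 = y$2"
  by (simp add: vec_eq_iff forall_2)

lemma gg_deriv: assumes "x \<noteq> 0" shows "(gg has_derivative JJ x) (at x)"
proof -
  have "((\<lambda>x. G1 x *\<^sub>R axis 1 1 + G2 x *\<^sub>R axis 2 1) has_derivative
     (\<lambda>d. (Pp x * d$1 + Qq x * d$2) *\<^sub>R axis 1 1 + (Qq x * d$1 + Tt x * d$2) *\<^sub>R (axis 2 1 :: real^2))) (at x)"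
    by (intro has_derivative_add has_derivative_scaleR_left G1_deriv G2_deriv assms)
  then show ?thesis unfolding gg_def[abs_def] JJ_def[abs_def] .
qed

lemma gg0[simp]: "gg 0 = 0" by (simp add: vec2_eq G1_def G2_def)

lemma hh_deriv_all: "(hh has_derivative (\<lambda>v. gg x \<bullet> v)) (at x)"
proof (cases "x = 0")
  case False
  show ?thesis using hh_deriv[OF False] by (simp add: inner2 mult.commute)
next
  case True
  have bound: "\<bar>hh z\<bar> \<le> norm z ^ 2" for z
  proof -
    have s: "0 \<le> (z$1)^2 + (z$2)^2" by simp
    have n: "norm z ^ 2 = (z$1)^2 + (z$2)^2" by (simp add: norm2)
    have num: "0 \<le> z$1^4 + z$1^2*z$2^2 + z$2^4" by simp
    have e: "4 * ((z$1)^2 + (z$2)^2) * ((z$1)^2 + (z$2)^2) - (z$1^4 + z$1^2*z$2^2 + z$2^4)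
        = 3*(z$1^2)^2 + 7*(z$1^2*z$2^2) + 3*(z$2^2)^2"
      by (simp add: power2_eq_square algebra_simps numeral_eq_Suc)
    have "0 \<le> 3*(z$1^2)^2 + 7*(z$1^2*z$2^2) + 3*(z$2^2)^2" by simp
    then have le: "z$1^4 + z$1^2*z$2^2 + z$2^4 \<le> 4 * ((z$1)^2 + (z$2)^2) * ((z$1)^2 + (z$2)^2)"
      using e by linarith
    have "hh z \<le> ((z$1)^2 + (z$2)^2)"
    proof (cases "(z$1)^2 + (z$2)^2 = 0")
      case True then show ?thesis by (simp add: hh_def)
    next
      case False
      then have "(z$1)^2 + (z$2)^2 > 0" using s by (metis order_le_less)
      then have "4 * ((z$1)^2 + (z$2)^2) > 0" by simp
      then show ?thesis unfolding hh_def using le by (simp add: divide_le_eq mult_ac)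
    qed
    moreover have "hh z \<ge> 0" unfolding hh_def using num s by simp
    ultimately show ?thesis using n by simp
  qed
  have h0: "hh 0 = 0" by (simp add: hh_def)
  have lim: "((\<lambda>y. norm (hh y - hh 0 - gg 0 \<bullet> (y - 0)) / norm (y - 0)) \<longlongrightarrow> 0) (at (0::real^2))"
  proof (rule Lim_null_comparison)
    show "\<forall>\<^sub>F y in at 0. norm (norm (hh y - hh 0 - gg 0 \<bullet> (y - 0)) / norm (y - 0)) \<le> norm y"
    proof (rule always_eventually, rule allI)
      fix y :: "real^2"
      show "norm (norm (hh y - hh 0 - gg 0 \<bullet> (y - 0)) / norm (y - 0)) \<le> norm y"
      proof (cases "y = 0")
        case True then show ?thesis by simp
      next
        case False
        then have "norm y > 0" by simp
        then show ?thesis using bound[of y] h0 by (simp add: divide_le_eq power2_eq_square)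
      qed
    qed
    show "((\<lambda>y. norm y) \<longlongrightarrow> 0) (at (0::real^2))"
      using tendsto_norm_zero[OF tendsto_ident_at[of "0::real^2" UNIV]] by simp
  qed
  have bl: "bounded_linear (\<lambda>v. gg 0 \<bullet> v)" by (rule bounded_linear_inner_right)
  show ?thesis unfolding True has_derivative_iff_norm using bl lim by blast
qed


lemma Pp_ab: "Pp x = ((x$1^2)^3+3*(x$1^2)^2*(x$2^2)+6*(x$1^2)*(x$2^2)^2)/(2*((x$1^2)+(x$2^2))^3)"
  by (simp add: Pp_def flip: power_mult)
lemma Tt_ab: "Tt x = ((x$2^2)^3+3*(x$2^2)^2*(x$1^2)+6*(x$2^2)*(x$1^2)^2)/(2*((x$1^2)+(x$2^2))^3)"
  by (simp add: Tt_def flip: power_mult)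
lemma Qq_ab: "(Qq x)^2 = 4*(x$1^2)^3*(x$2^2)^3/((x$1^2)+(x$2^2))^6"
  by (simp add: Qq_def power_divide power_mult_distrib flip: power_mult)

lemma jac_props: assumes "x \<noteq> 0"
  shows "Pp x \<ge> 0" "Tt x \<ge> 0" "Pp x * Tt x \<ge> (Qq x)^2" "1 - Pp x \<ge> 0" "1 - Tt x \<ge> 0"
    "(1 - Pp x)*(1 - Tt x) \<ge> (Qq x)^2"
proof -
  have s: "x$1^2 + x$2^2 \<noteq> 0" using nz2[OF assms] .
  have pos: "x$1^2 + x$2^2 > 0" using s by (metis add_nonneg_nonneg order_le_less zero_le_power2)
  note I = ineqs[of "x$1^2" "x$2^2", OF zero_le_power2 zero_le_power2 pos]
  show "Pp x \<ge> 0" "Tt x \<ge> 0" "Pp x * Tt x \<ge> (Qq x)^2" "1 - Pp x \<ge> 0" "1 - Tt x \<ge> 0"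
    "(1 - Pp x)*(1 - Tt x) \<ge> (Qq x)^2"
    unfolding Pp_ab Tt_ab Qq_ab using I by auto
qed

lemma JJ_psd: assumes "x \<noteq> 0" shows "0 \<le> d \<bullet> JJ x d"
proof -
  have "d \<bullet> JJ x d = Pp x * (d$1)^2 + 2 * Qq x * (d$1) * (d$2) + Tt x * (d$2)^2"
    by (simp add: inner2 power2_eq_square algebra_simps)
  also have "\<dots> \<ge> 0" using jac_props[OF assms] by (intro psd2) auto
  finally show ?thesis .
qed

lemma JJ_norm: assumes "x \<noteq> 0" shows "norm (JJ x d) \<le> norm d"
proof -
  have "(Pp x * d$1 + Qq x * d$2)^2 + (Qq x * d$1 + Tt x * d$2)^2 \<le> (d$1)^2 + (d$2)^2"
    using jac_props[OF assms] by (intro nrm2) auto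
  then show ?thesis by (simp add: norm2)
qed

lemma euler_alg: fixes u w :: real assumes s: "u^2+w^2 \<noteq> 0"
  shows "(u^5 + 2*u^3*w^2)/(2*(u^2+w^2)^2) = (u^6 + 3*u^4*w^2 + 6*u^2*w^4)/(2*(u^2+w^2)^3) * u + (-2*u^3*w^3/(u^2+w^2)^3) * w"
proof -
  define S where "S = u^2+w^2"
  have S: "S \<noteq> 0" using s S_def by simp
  show ?thesis unfolding S_def[symmetric] using S
    apply (simp add: field_simps)
    apply (simp add: S_def power2_eq_square power3_eq_cube numeral_eq_Suc algebra_simps)
    done
qed

lemma euler: assumes "x \<noteq> 0" shows "gg x = JJ x x"
proof -
  have s: "x$1^2 + x$2^2 \<noteq> 0" using nz2[OF assms] .
  have s': "x$2^2 + x$1^2 \<noteq> 0" using s by (simp add: add.commute)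
  have 1: "G1 x = Pp x * x$1 + Qq x * x$2" unfolding G1_def Pp_def Qq_def by (rule euler_alg[OF s])
  have 2: "G2 x = Qq x * x$1 + Tt x * x$2" unfolding G2_def Tt_def Qq_def
    using euler_alg[OF s'] by (simp add: add.commute mult.commute mult.left_commute)
  show ?thesis using 1 2 by (simp add: vec2_eq)
qed

lemma homog_alg: fixes u w c :: real
  shows "((c*u)^5 + 2*(c*u)^3*(c*w)^2)/(2*((c*u)^2+(c*w)^2)^2) = c * ((u^5 + 2*u^3*w^2)/(2*(u^2+w^2)^2))"
proof (cases "c = 0")
  case True then show ?thesis by simp
next
  case False
  have "((c*u)^5 + 2*(c*u)^3*(c*w)^2) = c^5 * (u^5 + 2*u^3*w^2)"
    by (simp add: power_mult_distrib algebra_simps numeral_eq_Suc)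
  moreover have "2*((c*u)^2+(c*w)^2)^2 = c^4 * (2*(u^2+w^2)^2)"
    by (simp add: power_mult_distrib algebra_simps numeral_eq_Suc)
  ultimately show ?thesis using False by (simp add: numeral_eq_Suc)
qed

lemma homog: "gg (c *\<^sub>R x) = c *\<^sub>R gg x"
proof -
  have 1: "G1 (c *\<^sub>R x) = c * G1 x" unfolding G1_def using homog_alg[of c "x$1" "x$2"] by simp
  have 2: "G2 (c *\<^sub>R x) = c * G2 x" unfolding G2_def using homog_alg[of c "x$2" "x$1"]
    by (simp add: add.commute)
  show ?thesis using 1 2 by (simp add: vec2_eq)
qed


lemma rho_poly: fixes a b :: real assumes "a \<ge> 0" "b \<ge> 0"
  shows "4 * (a*(a^2+2*a*b+2*b^2)^2 + b*(2*a^2+2*a*b+b^2)^2) \<le> 9 * (a+b)^5"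
proof -
  have "9 * (a+b)^5 - 4 * (a*(a^2+2*a*b+2*b^2)^2 + b*(2*a^2+2*a*b+b^2)^2)
     = 5*a^5+13*a^4*b+26*a^3*b^2+26*a^2*b^3+13*a*b^4+5*b^5"
    by (simp add: power2_eq_square power3_eq_cube algebra_simps numeral_eq_Suc)
  moreover have "0 \<le> 5*a^5+13*a^4*b+26*a^3*b^2+26*a^2*b^3+13*a*b^4+5*b^5"
    using assms by (intro add_nonneg_nonneg mult_nonneg_nonneg) auto
  ultimately show ?thesis by linarith
qed

lemma rho_d: fixes u w :: real assumes s: "u^2+w^2 \<noteq> 0"
  shows "u - (u^5 + 2*u^3*w^2)/(2*(u^2+w^2)^2) = u*((u^2)^2+2*(u^2)*(w^2)+2*(w^2)^2)/(2*((u^2)+(w^2))^2)"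
proof -
  define S where "S = u^2+w^2"
  have S: "S \<noteq> 0" using s S_def by simp
  show ?thesis unfolding S_def[symmetric] using S
    apply (simp add: field_simps)
    apply (simp add: S_def power2_eq_square power3_eq_cube numeral_eq_Suc algebra_simps)
    done
qed

lemma rho_bound: "norm (x - gg x) \<le> 3/4 * norm x"
proof (cases "x = 0")
  case True then show ?thesis by simp
next
  case False
  have s: "x$1^2 + x$2^2 \<noteq> 0" using nz2[OF False] .
  have s': "x$2^2 + x$1^2 \<noteq> 0" using s by (simp add: add.commute)
  define a where "a = x$1^2"
  define b where "b = x$2^2"
  have a: "a \<ge> 0" and b: "b \<ge> 0" unfolding a_def b_def by simp_all
  have ab: "a + b > 0" using s a b unfolding a_def b_def by (metis add_nonneg_nonneg order_le_less)
  have d1: "x$1 - G1 x = x$1 * (a^2+2*a*b+2*b^2)/(2*(a+b)^2)"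
    unfolding G1_def a_def b_def by (rule rho_d[OF s])
  have d2: "x$2 - G2 x = x$2 * (2*a^2+2*a*b+b^2)/(2*(a+b)^2)"
    unfolding G2_def a_def b_def using rho_d[OF s'] by (simp add: add.commute mult.commute algebra_simps)
  have "(norm (x - gg x))^2 = (x$1 - G1 x)^2 + (x$2 - G2 x)^2" by (simp add: norm2)
  also have "\<dots> = (a*(a^2+2*a*b+2*b^2)^2 + b*(2*a^2+2*a*b+b^2)^2) / (4*(a+b)^4)"
    unfolding d1 d2 by (simp add: power_divide power_mult_distrib a_def b_def add_divide_distrib flip: power_mult)
  also have "\<dots> \<le> (9/4 * (a+b)^5) / (4*(a+b)^4)"
    using rho_poly[OF a b] ab by (intro divide_right_mono) auto
  also have "\<dots> = 9/16 * (a+b)"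
  proof -
    have "(a+b)^5 = (a+b)^4 * (a+b)" by (simp add: numeral_eq_Suc)
    then show ?thesis using ab by simp
  qed
  also have "\<dots> = (3/4 * norm x)^2"
  proof -
    have nx: "(norm x)^2 = a+b" unfolding norm2 a_def b_def
      by (rule real_sqrt_pow2) simp
    have "(3/4 * norm x)^2 = 9/16 * (norm x)^2" by (simp add: power_mult_distrib power2_eq_square)
    then show ?thesis using nx by simp
  qed
  finally show ?thesis by (rule power2_le_imp_le) simp
qed


lemma line_deriv: "((\<lambda>t::real. x + t *\<^sub>R d) has_derivative (\<lambda>s. s *\<^sub>R d)) (at t)"
  by (auto intro!: derivative_eq_intros)

lemma gg_dd_nonneg: "0 \<le> gg d \<bullet> d"
proof (cases "d = 0")
  case True then show ?thesis by simp
next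
  case False then show ?thesis using JJ_psd[OF False, of d] euler[OF False] by (simp add: inner_commute)
qed

lemma gg_norm: "norm (gg d) \<le> norm d"
proof (cases "d = 0")
  case True then show ?thesis by simp
next
  case False then show ?thesis using JJ_norm[OF False, of d] euler[OF False] by simp
qed

lemma lip: "norm (gg y - gg x) \<le> norm (y - x)"
proof -
  define d where "d = y - x"
  show ?thesis
  proof (cases "\<exists>t0. x + t0 *\<^sub>R d = 0")
    case True
    then obtain t0 where t0: "x + t0 *\<^sub>R d = 0" by blast
    then have x: "x = (-t0) *\<^sub>R d" by (simp add: eq_neg_iff_add_eq_0 add.commute)
    have yd: "y = x + d" by (simp add: d_def)
    have y: "y = (1 - t0) *\<^sub>R d" using yd by (simp add: x algebra_simps)
    have "gg y - gg x = gg d" unfolding x y homog by (simp add: algebra_simps)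
    then show ?thesis using gg_norm[of d] d_def by simp
  next
    case False
    define \<psi> where "\<psi> t = gg (x + t *\<^sub>R d)" for t
    have der: "(\<psi> has_derivative (\<lambda>s. JJ (x + t *\<^sub>R d) (s *\<^sub>R d))) (at t)" for t
      unfolding \<psi>_def
      by (rule has_derivative_compose[OF line_deriv gg_deriv]) (use False in blast)
    have cont: "continuous_on {0..1} \<psi>"
      by (rule continuous_at_imp_continuous_on) (use der has_derivative_continuous in blast)
    obtain t where "norm (\<psi> 1 - \<psi> 0) \<le> norm (JJ (x + t *\<^sub>R d) ((1 - 0) *\<^sub>R d))"
      using mvt_general[of 0 1 \<psi>, OF _ cont der] by auto
    also have "\<dots> \<le> norm d" using JJ_norm[of "x + t *\<^sub>R d" d] False by auto
    finally show ?thesis unfolding \<psi>_def d_def by simp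
  qed
qed

lemma hh_convex: "convex_on UNIV hh"
proof (rule convex_onI)
  fix u :: real and x y :: "real^2"
  assume u: "0 < u" "u < 1"
  define d where "d = y - x"
  define \<phi> where "\<phi> t = hh (x + t *\<^sub>R d)" for t
  define \<phi>' where "\<phi>' t = gg (x + t *\<^sub>R d) \<bullet> d" for t
  have der: "(\<phi> has_real_derivative \<phi>' t) (at t)" for t
  proof -
    have "(\<phi> has_derivative (\<lambda>s. gg (x + t *\<^sub>R d) \<bullet> (s *\<^sub>R d))) (at t)"
      unfolding \<phi>_def by (rule has_derivative_compose[OF line_deriv hh_deriv_all])
    moreover have "(\<lambda>s. gg (x + t *\<^sub>R d) \<bullet> (s *\<^sub>R d)) = (*) (\<phi>' t)"
      by (auto simp: \<phi>'_def mult.commute)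
    ultimately show ?thesis by (simp add: has_field_derivative_def)
  qed
  have mono: "\<phi>' s \<le> \<phi>' t" if st: "s \<le> t" for s t
  proof (cases "\<exists>t0. x + t0 *\<^sub>R d = 0")
    case True
    then obtain t0 where t0: "x + t0 *\<^sub>R d = 0" by blast
    have e: "x + r *\<^sub>R d = (r - t0) *\<^sub>R d" for r
    proof -
      have x: "x = - (t0 *\<^sub>R d)" using t0 by (simp add: eq_neg_iff_add_eq_0)
      show ?thesis unfolding x by (simp add: algebra_simps)
    qed
    have "\<phi>' r = (r - t0) * (gg d \<bullet> d)" for r unfolding \<phi>'_def e homog by simp
    then show ?thesis using st gg_dd_nonneg[of d] by (simp add: mult_right_mono)
  next
    case False
    show ?thesis
    proof (rule DERIV_nonneg_imp_nondecreasing[OF st])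
      fix r assume "s \<le> r" "r \<le> t"
      have "((\<lambda>r. gg (x + r *\<^sub>R d) \<bullet> d) has_derivative (\<lambda>h. JJ (x + r *\<^sub>R d) (h *\<^sub>R d) \<bullet> d)) (at r)"
        by (rule has_derivative_inner_left, rule has_derivative_compose[OF line_deriv gg_deriv]) (use False in blast)
      moreover have "(\<lambda>h. JJ (x + r *\<^sub>R d) (h *\<^sub>R d) \<bullet> d) = (*) (JJ (x + r *\<^sub>R d) d \<bullet> d)"
      proof
        fix h :: real
        have "JJ (x + r *\<^sub>R d) (h *\<^sub>R d) = h *\<^sub>R JJ (x + r *\<^sub>R d) d"
          by (simp add: vec2_eq algebra_simps)
        then show "JJ (x + r *\<^sub>R d) (h *\<^sub>R d) \<bullet> d = (JJ (x + r *\<^sub>R d) d \<bullet> d) * h"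
          by (simp add: mult.commute)
      qed
      ultimately have "DERIV \<phi>' r :> (JJ (x + r *\<^sub>R d) d \<bullet> d)"
        unfolding \<phi>'_def by (simp add: has_field_derivative_def)
      moreover have "JJ (x + r *\<^sub>R d) d \<bullet> d \<ge> 0"
        using JJ_psd[of "x + r *\<^sub>R d" d] False by (auto simp: inner_commute)
      ultimately show "\<exists>y. DERIV \<phi>' r :> y \<and> 0 \<le> y" by blast
    qed
  qed
  have cvx: "convex_on UNIV \<phi>"
    by (rule convex_on_realI[of UNIV \<phi> \<phi>']) (auto intro: der mono)
  have "\<phi> ((1 - u) *\<^sub>R 0 + u *\<^sub>R 1) \<le> (1 - u) * \<phi> 0 + u * \<phi> 1"
    using convex_onD[OF cvx, of u 0 1] u by simp
  moreover have "(1 - u) *\<^sub>R x + u *\<^sub>R y = x + u *\<^sub>R d"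
    unfolding d_def by (simp add: algebra_simps)
  ultimately show "hh ((1 - u) *\<^sub>R x + u *\<^sub>R y) \<le> (1 - u) * hh x + u * hh y"
    unfolding \<phi>_def d_def by simp
qed simp


definition pt :: "real \<Rightarrow> real \<Rightarrow> real^2" where
  "pt a b = a *\<^sub>R axis 1 1 + b *\<^sub>R axis 2 1"
lemma pt1[simp]: "pt a b $ 1 = a" and pt2[simp]: "pt a b $ 2 = b"
  by (simp_all add: pt_def axis_def)
lemma norm_pt: "(norm (pt a b))^2 = a^2 + b^2"
  unfolding norm2 by (simp add: add_nonneg_nonneg)

lemma sc_contra:
  fixes e \<mu> t :: real
  assumes e: "e > 0" and mu: "\<mu> > 0" and t: "t > 0" and tm: "t^2 \<le> e^2 * (\<mu>/2)"
    and ineq: "e^2/4 - \<mu>/2*e^2 \<le> (e^4+e^2*t^2+t^4)/(4*(e^2+t^2)) - \<mu>/2*(e^2+t^2)"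
  shows False
proof -
  define K where "K = e^2 + t^2"
  have K: "K > 0" unfolding K_def using e by (simp add: add_pos_nonneg)
  have "(e^2/4 - \<mu>/2*e^2) * (4*K) \<le> ((e^4+e^2*t^2+t^4)/(4*K) - \<mu>/2*K) * (4*K)"
    using ineq K unfolding K_def[symmetric] by (intro mult_right_mono) auto
  also have "\<dots> = (e^4+e^2*t^2+t^4) - 2*\<mu>*K^2"
    using K by (simp add: field_simps power2_eq_square)
  finally have "(e^2 - 2*\<mu>*e^2) * K \<le> (e^4+e^2*t^2+t^4) - 2*\<mu>*K^2"
    by (simp add: algebra_simps)
  then have "t^2 * (2*\<mu>*K - t^2) \<le> 0"
    unfolding K_def by (simp add: power2_eq_square algebra_simps numeral_eq_Suc)
  moreover have "t^2 > 0" using t by simp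
  ultimately have "2*\<mu>*K - t^2 \<le> 0" by (simp add: mult_le_0_iff)
  moreover have "2*\<mu>*e^2 \<le> 2*\<mu>*K" unfolding K_def using mu by simp
  ultimately have "2*\<mu>*e^2 \<le> e^2*(\<mu>/2)" using tm by linarith
  moreover have "e^2 * (\<mu>/2) < 2*\<mu>*e^2" using e mu by simp
  ultimately show False by linarith
qed

lemma not_sc: "\<not> (\<exists>U. open U \<and> 0 \<in> U \<and> strongly_convex_on U hh)"
proof
  assume "\<exists>U. open U \<and> 0 \<in> U \<and> strongly_convex_on U hh"
  then obtain U \<mu> where U: "open U" "0 \<in> U" and mu: "\<mu> > 0"
    and cvx: "convex_on U (\<lambda>x. hh x - \<mu> / 2 * (norm x)\<^sup>2)"
    unfolding strongly_convex_on_def by blast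
  obtain \<delta> where d: "\<delta> > 0" "ball 0 \<delta> \<subseteq> U" using U open_contains_ball by blast
  define e where "e = \<delta>/2"
  define m where "m = min (1/2) \<mu>"
  define t where "t = e * m"
  have e: "e > 0" unfolding e_def using d by simp
  have m: "m > 0" "m \<le> 1/2" "m \<le> \<mu>" unfolding m_def using mu by auto
  have t: "t > 0" unfolding t_def using e m by simp
  have tm: "t^2 \<le> e^2 * (\<mu>/2)"
  proof -
    have "m*m \<le> (1/2) * \<mu>" using m by (intro mult_mono) auto
    then have "m^2 \<le> (1/2) * \<mu>" by (simp add: power2_eq_square)
    then show ?thesis unfolding t_def using e by (simp add: power_mult_distrib mult_left_mono)
  qed
  have tle: "t^2 \<le> e^2/4"
  proof -
    have "m*m \<le> (1/2)*(1/2)" using m by (intro mult_mono) auto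
    then have "m^2 \<le> 1/4" by (simp add: power2_eq_square)
    then show ?thesis unfolding t_def using e by (simp add: power_mult_distrib)
  qed
  have inU: "pt e t \<in> U" "pt e (-t) \<in> U"
  proof -
    have d2: "\<delta>^2 > 0" using d(1) by simp
    have "e^2 = \<delta>^2/4" unfolding e_def by (simp add: power_divide)
    then have "e^2 + t^2 < \<delta>^2" using tle d2 by linarith
    then have "(norm (pt e t))^2 < \<delta>^2" "(norm (pt e (-t)))^2 < \<delta>^2"
      unfolding norm_pt by simp_all
    then have "norm (pt e t) < \<delta>" "norm (pt e (-t)) < \<delta>"
      using d(1) by (auto intro: power2_less_imp_less)
    then show "pt e t \<in> U" "pt e (-t) \<in> U" using d(2) by (auto simp: dist_norm)
  qed
  have mid: "(1 - 1/2) *\<^sub>R pt e (-t) + (1/2) *\<^sub>R pt e t = pt e 0"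
    by (simp add: vec2_eq)
  have "hh (pt e 0) - \<mu>/2*(norm (pt e 0))^2 \<le>
      (1 - 1/2) * (hh (pt e (-t)) - \<mu>/2*(norm (pt e (-t)))^2) + (1/2) * (hh (pt e t) - \<mu>/2*(norm (pt e t))^2)"
    using convex_onD[OF cvx, of "1/2" "pt e (-t)" "pt e t"] inU unfolding mid by simp
  moreover have "hh (pt e 0) = e^2/4" unfolding hh_def using e by (simp add: power2_eq_square numeral_eq_Suc)
  moreover have "hh (pt e t) = (e^4+e^2*t^2+t^4)/(4*(e^2+t^2))" unfolding hh_def by simp
  moreover have "hh (pt e (-t)) = (e^4+e^2*t^2+t^4)/(4*(e^2+t^2))" unfolding hh_def by simp
  ultimately have "e^2/4 - \<mu>/2*e^2 \<le> (e^4+e^2*t^2+t^4)/(4*(e^2+t^2)) - \<mu>/2*(e^2+t^2)"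
    unfolding norm_pt by simp
  then show False using sc_contra[OF e mu t tm] by blast
qed

definition M0 :: "real^2 \<Rightarrow> real^2" where "M0 d = (d$1/2) *\<^sub>R axis 1 1"

lemma JJ_axis: assumes "c \<noteq> 0" shows "JJ (c *\<^sub>R axis 1 1) = M0"
proof
  fix d :: "real^2"
  have z: "(c *\<^sub>R axis 1 1 :: real^2) = pt c 0" by (simp add: vec2_eq axis_def)
  have "Pp (pt c 0) = 1/2" unfolding Pp_def using assms by (simp add: numeral_eq_Suc)
  moreover have "Qq (pt c 0) = 0" "Tt (pt c 0) = 0" unfolding Qq_def Tt_def by simp_all
  ultimately show "JJ (c *\<^sub>R axis 1 1) d = M0 d" unfolding z by (simp add: vec2_eq M0_def axis_def)
qed

lemma clarke: "\<exists>M\<in>clarke_jacobian gg 0. \<not> invertible M"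
proof
  define zs where "zs k = inverse (real (Suc k)) *\<^sub>R (axis 1 1 :: real^2)" for k
  have znz: "zs k \<noteq> 0" for k unfolding zs_def by (simp add: axis_def vec_eq_iff)
  have lim: "zs \<longlonglongrightarrow> 0"
    unfolding zs_def using tendsto_scaleR[OF LIMSEQ_inverse_real_of_nat tendsto_const, of "axis 1 1 :: real^2"]
    by simp
  have dif: "gg differentiable (at (zs k))" for k using gg_deriv[OF znz] by (rule differentiableI)
  have fd: "frechet_derivative gg (at (zs k)) = M0" for k
    using frechet_derivative_at[OF gg_deriv[OF znz[of k]]] JJ_axis[of "inverse (real (Suc k))"]
    unfolding zs_def by simp
  show "matrix M0 \<in> clarke_jacobian gg 0"
    unfolding clarke_jacobian_def
    by (rule hull_inc, rule CollectI, rule exI[of _ zs]) (use lim dif fd in simp)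
  have lin: "linear M0" unfolding M0_def by (intro linearI) (simp_all add: add_divide_distrib scaleR_add_left)
  have "matrix M0 *v axis 2 1 = 0"
  proof -
    have lin': "Vector_Spaces.linear (*s) (*s) M0"
      using lin unfolding linear_def scalar_mult_eq_scaleR by simp
    show ?thesis using matrix_works[OF lin', of "axis 2 1"] by (simp add: M0_def axis_def)
  qed
  show "\<not> invertible (matrix M0)"
  proof
    assume "invertible (matrix M0)"
    then obtain A' where "A' ** matrix M0 = mat 1" unfolding invertible_def by blast
    then have "(axis 2 1 :: real^2) = A' *v (matrix M0 *v axis 2 1)"
      by (simp add: matrix_vector_mul_assoc)
    then have "(axis 2 1 :: real^2) = 0" using \<open>matrix M0 *v axis 2 1 = 0\<close> by simp
    then have "(axis 2 1 :: real^2) $ 2 = 0" by simp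
    then show False by (simp add: axis_def)
  qed
qed

theorem proposition4:
  shows "\<exists>(h :: real^2 \<Rightarrow> real) (g :: real^2 \<Rightarrow> real^2) (\<rho>::real).
     convex_on UNIV h \<and> semialgebraic_fun h \<and>
     (\<forall>x. (h has_derivative (\<lambda>v. g x \<bullet> v)) (at x)) \<and>
     continuous_on UNIV g \<and>
     (\<forall>x y. norm (g x - g y) \<le> norm (x - y)) \<and>
     0 < \<rho> \<and> \<rho> < 1 \<and>
     (\<forall>x. norm (x - g x) \<le> \<rho> * norm x) \<and>
     \<not> (\<exists>U. open U \<and> 0 \<in> U \<and> strongly_convex_on U h) \<and>
     (\<exists>M\<in>clarke_jacobian g 0. \<not> invertible M)"
proof (intro exI conjI)
  show "convex_on UNIV hh" by (rule hh_convex)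
  show "semialgebraic_fun hh" by (rule semialg_hh)
  show "\<forall>x. (hh has_derivative (\<lambda>v. gg x \<bullet> v)) (at x)" using hh_deriv_all by blast
  show "\<forall>x y. norm (gg x - gg y) \<le> norm (x - y)" using lip by blast
  then show "continuous_on UNIV gg"
    by (intro lipschitz_on_continuous_on[of 1] lipschitz_onI) (auto simp: dist_norm)
  show "(0::real) < 3/4" "(3/4::real) < 1" by simp_all
  show "\<forall>x. norm (x - gg x) \<le> 3/4 * norm x" using rho_bound by blast
  show "\<not> (\<exists>U. open U \<and> 0 \<in> U \<and> strongly_convex_on U hh)" by (rule not_sc)
  show "\<exists>M\<in>clarke_jacobian gg 0. \<not> invertible M" by (rule clarke)
qed


end
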